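(* Let $X$ be a minimal dendric shift over $\mathcal{A}_3=\{1,2,3\}$, let $\boldsymbol\sigma=(\sigma_n)_{n\ge1}$ be a primitive $\Sigma_3\mathcal{S}_3\Sigma_3$-adic representation of $X$, and let $\lambda_1,\lambda_2,\lambda_3$ be the letter frequencies of $X$. Suppose $\sigma_1\in\{\alpha,\pi_{132}\eta\pi_{321},\pi_{312}\beta\pi_{213},\pi_{213}\gamma\}\cup\{\pi_{213}\delta^{(k)}:k\ge1\}$. Then: $\lambda_1>\lambda_2+\lambda_3$ iff $\sigma_1=\alpha$; $\lambda_2,\lambda_3<\lambda_1<\lambda_2+\lambda_3$ iff $\sigma_1=\pi_{132}\eta\pi_{321}$; $\lambda_2<\lambda_1<\lambda_3$ iff $\sigma_1=\pi_{312}\beta\pi_{213}$; $\lambda_3<\lambda_1<\lambda_2$ iff $\sigma_1=\pi_{213}\gamma$; and, for $k\ge1$, ($\lambda_1<\lambda_2$, $\lambda_1<\lambda_3$ and $k\lambda_1<\lambda_3<(k+1)\lambda_1$) iff $\sigma_1=\pi_{213}\delta^{(k)}$.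
   Context: A shift space over $\mathcal{A}$ is a closed shift-invariant $X\subseteq\mathcal{A}^{\mathbb{Z}}$ in which all letters occur, with factor set $\mathcal{L}(X)$; minimal if its only closed shift-invariant subsets are $\emptyset,X$; dendric if for each $w\in\mathcal{L}(X)$ the bipartite graph with left vertices $\{a:aw\in\mathcal{L}(X)\}$, right vertices $\{b:wb\in\mathcal{L}(X)\}$ and edges $\{a,b\}$ for $awb\in\mathcal{L}(X)$ is a tree. $X$ has letter frequencies $(\lambda_a)_{a\in\mathcal{A}}$ if for all $x\in X$ and $a$, $\lim_n|x_1\cdots x_n|_a/n=\lambda_a$; minimal dendric shifts over $\mathcal{A}_3$ are known to be uniquely ergodic and hence to have letter frequencies. A directive sequence $(\sigma_n)$ of non-erasing morphisms is primitive if for each $n$ there is $N>n$ such that every letter occurs in $\sigma_n\cdots\sigma_{N-1}(b)$ for all letters $b$; it represents the shift of bi-infinite words all of whose factors occur in some $\sigma_1\cdots\sigma_{N-1}(a)$. $\pi_{abc}$ is the morphism $1\mapsto a,2\mapsto b,3\mapsto c$; $\Sigma_3$ the set of these; juxtaposition is composition. $\mathcal{S}_3=\{\alpha,\beta,\gamma,\eta\}\cup\{\delta^{(k)},\zeta^{(k)}:k\ge1\}$ with $\alpha:1\mapsto1,2\mapsto12,3\mapsto13$; $\beta:1\mapsto1,2\mapsto12,3\mapsto132$; $\gamma:1\mapsto1,2\mapsto12,3\mapsto123$; $\delta^{(k)}:1\mapsto1,2\mapsto123^k,3\mapsto123^{k+1}$; $\zeta^{(k)}:1\mapsto13^k,2\mapsto12,3\mapsto13^{k+1}$;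 $\eta:1\mapsto13,2\mapsto12,3\mapsto123$; a $\Sigma_3\mathcal{S}_3\Sigma_3$-adic representation has each $\sigma_n=\pi\sigma\pi'$ with $\pi,\pi'\in\Sigma_3$, $\sigma\in\mathcal{S}_3$. *)

theory Defs
  imports Complex_Main
begin

datatype letter = L1 | L2 | L3

type_synonym morph = "letter \<Rightarrow> letter list"
type_synonym biword = "int \<Rightarrow> letter"

definition morph_word :: "morph \<Rightarrow> letter list \<Rightarrow> letter list" where
  "morph_word s w = concat (map s w)"

text \<open>Juxtaposition = composition: (s t)(a) = s(t(a)).\<close>
definition mcomp :: "morph \<Rightarrow> morph \<Rightarrow> morph" where
  "mcomp s t = (\<lambda>a. morph_word s (t a))"

definition mid :: morph where "mid = (\<lambda>a. [a])"

definition non_erasing :: "morph \<Rightarrow> bool" where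
  "non_erasing s \<longleftrightarrow> (\<forall>a. s a \<noteq> [])"

fun comps :: "(nat \<Rightarrow> morph) \<Rightarrow> nat \<Rightarrow> nat \<Rightarrow> morph" where
  "comps sig n 0 = mid"
| "comps sig n (Suc k) = mcomp (sig n) (comps sig (Suc n) k)"

definition pi :: "letter \<Rightarrow> letter \<Rightarrow> letter \<Rightarrow> morph" where
  "pi a b c = (\<lambda>x. case x of L1 \<Rightarrow> [a] | L2 \<Rightarrow> [b] | L3 \<Rightarrow> [c])"

definition Sigma3 :: "morph set" where
  "Sigma3 = {pi a b c | a b c. distinct [a, b, c]}"

definition alpha :: morph where
  "alpha = (\<lambda>x. case x of L1 \<Rightarrow> [L1] | L2 \<Rightarrow> [L1, L2] | L3 \<Rightarrow> [L1, L3])"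
definition beta :: morph where
  "beta = (\<lambda>x. case x of L1 \<Rightarrow> [L1] | L2 \<Rightarrow> [L1, L2] | L3 \<Rightarrow> [L1, L3, L2])"
definition gamma :: morph where
  "gamma = (\<lambda>x. case x of L1 \<Rightarrow> [L1] | L2 \<Rightarrow> [L1, L2] | L3 \<Rightarrow> [L1, L2, L3])"
definition delta :: "nat \<Rightarrow> morph" where
  "delta k = (\<lambda>x. case x of L1 \<Rightarrow> [L1] | L2 \<Rightarrow> [L1, L2] @ replicate k L3
                             | L3 \<Rightarrow> [L1, L2] @ replicate (k+1) L3)"
definition zeta :: "nat \<Rightarrow> morph" where
  "zeta k = (\<lambda>x. case x of L1 \<Rightarrow> [L1] @ replicate k L3 | L2 \<Rightarrow> [L1, L2]
                            | L3 \<Rightarrow> [L1] @ replicate (k+1) L3)"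
definition eta :: morph where
  "eta = (\<lambda>x. case x of L1 \<Rightarrow> [L1, L3] | L2 \<Rightarrow> [L1, L2] | L3 \<Rightarrow> [L1, L2, L3])"

definition S3 :: "morph set" where
  "S3 = {alpha, beta, gamma, eta} \<union> {delta k | k. k \<ge> 1} \<union> {zeta k | k. k \<ge> 1}"

definition shift :: "biword \<Rightarrow> biword" where
  "shift x = (\<lambda>i. x (i + 1))"

definition factor_at :: "biword \<Rightarrow> int \<Rightarrow> nat \<Rightarrow> letter list" where
  "factor_at x i n = map (\<lambda>k. x (i + int k)) [0..<n]"

definition lang :: "biword set \<Rightarrow> letter list set" where
  "lang X = {w. \<exists>x\<in>X. \<exists>i. w = factor_at x i (length w)}"

text \<open>Closed in the product topology of the discrete topology on letters.\<close>
definition closed_set :: "biword set \<Rightarrow> bool" where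
  "closed_set X \<longleftrightarrow>
     (\<forall>x. (\<forall>n::nat. \<exists>y\<in>X. \<forall>i. \<bar>i\<bar> \<le> int n \<longrightarrow> y i = x i) \<longrightarrow> x \<in> X)"

definition shift_invariant :: "biword set \<Rightarrow> bool" where
  "shift_invariant X \<longleftrightarrow> shift ` X = X"

definition shift_space :: "biword set \<Rightarrow> bool" where
  "shift_space X \<longleftrightarrow> closed_set X \<and> shift_invariant X \<and>
     (\<forall>a. \<exists>x\<in>X. \<exists>i. x i = a)"

definition minimal_shift :: "biword set \<Rightarrow> bool" where
  "minimal_shift X \<longleftrightarrow> shift_space X \<and>
     (\<forall>Y. Y \<subseteq> X \<longrightarrow> closed_set Y \<longrightarrow> shift_invariant Y \<longrightarrow> Y = {} \<or> Y = X)"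

text \<open>A finite simple undirected graph given by vertex set V and a symmetric edge predicate E.\<close>
definition graph_connected :: "'v set \<Rightarrow> ('v \<Rightarrow> 'v \<Rightarrow> bool) \<Rightarrow> bool" where
  "graph_connected V E \<longleftrightarrow>
     (\<forall>u\<in>V. \<forall>v\<in>V. (\<lambda>a b. a \<in> V \<and> b \<in> V \<and> E a b)\<^sup>*\<^sup>* u v)"

definition graph_acyclic :: "'v set \<Rightarrow> ('v \<Rightarrow> 'v \<Rightarrow> bool) \<Rightarrow> bool" where
  "graph_acyclic V E \<longleftrightarrow>
     \<not> (\<exists>vs. length vs \<ge> 3 \<and> distinct vs \<and> set vs \<subseteq> V \<and>
            (\<forall>i. Suc i < length vs \<longrightarrow> E (vs ! i) (vs ! Suc i)) \<and>
            E (last vs) (hd vs))"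

definition is_tree :: "'v set \<Rightarrow> ('v \<Rightarrow> 'v \<Rightarrow> bool) \<Rightarrow> bool" where
  "is_tree V E \<longleftrightarrow> graph_connected V E \<and> graph_acyclic V E"

text \<open>Extension graph of w: left copies Inl a, right copies Inr b.\<close>
definition ext_vertices :: "biword set \<Rightarrow> letter list \<Rightarrow> (letter + letter) set" where
  "ext_vertices X w = Inl ` {a. a # w \<in> lang X} \<union> Inr ` {b. w @ [b] \<in> lang X}"

definition ext_edge :: "biword set \<Rightarrow> letter list \<Rightarrow> (letter + letter) \<Rightarrow> (letter + letter) \<Rightarrow> bool" where
  "ext_edge X w u v \<longleftrightarrow>
     (\<exists>a b. ((u = Inl a \<and> v = Inr b) \<or> (u = Inr b \<and> v = Inl a)) \<and> a # w @ [b] \<in> lang X)"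

definition dendric :: "biword set \<Rightarrow> bool" where
  "dendric X \<longleftrightarrow> (\<forall>w \<in> lang X. is_tree (ext_vertices X w) (ext_edge X w))"

definition has_letter_freqs :: "biword set \<Rightarrow> (letter \<Rightarrow> real) \<Rightarrow> bool" where
  "has_letter_freqs X lam \<longleftrightarrow>
     (\<forall>x\<in>X. \<forall>a. (\<lambda>n. real (card {i \<in> {1..int n}. x i = a}) / real n) \<longlonglongrightarrow> lam a)"

section \<open>S-adic representations (sequences indexed from 1; index 0 is unused)\<close>

definition primitive_seq :: "(nat \<Rightarrow> morph) \<Rightarrow> bool" where
  "primitive_seq sig \<longleftrightarrow>
     (\<forall>n\<ge>1. \<exists>N>n. \<forall>a b. a \<in> set (comps sig n (N - n) b))"

definition represents :: "(nat \<Rightarrow> morph) \<Rightarrow> biword set \<Rightarrow> bool" where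
  "represents sig X \<longleftrightarrow>
     X = {x. \<forall>i n. \<exists>N\<ge>1. \<exists>a u v. comps sig 1 (N - 1) a = u @ factor_at x i n @ v}"

definition SSS_adic :: "(nat \<Rightarrow> morph) \<Rightarrow> bool" where
  "SSS_adic sig \<longleftrightarrow>
     (\<forall>n\<ge>1. \<exists>p\<in>Sigma3. \<exists>s\<in>S3. \<exists>p'\<in>Sigma3. sig n = mcomp p (mcomp s p'))"

end

theory Submission
  imports Defs
begin


lemma UNIV_letter: "(UNIV :: letter set) = {L1, L2, L3}"
  using letter.exhaust by auto

lemma finite_letter[simp]: "finite (UNIV :: letter set)"
  by (simp add: UNIV_letter)

lemma morph_word_append[simp]: "morph_word s (u @ v) = morph_word s u @ morph_word s v"
  by (simp add: morph_word_def)
lemma morph_word_Cons[simp]: "morph_word s (a # v) = s a @ morph_word s v"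
  by (simp add: morph_word_def)
lemma morph_word_Nil[simp]: "morph_word s [] = []"
  by (simp add: morph_word_def)
lemma morph_word_comp: "morph_word s (morph_word t w) = morph_word (mcomp s t) w"
  by (induction w) (simp_all add: mcomp_def)
lemma morph_word_mid: "morph_word mid w = w"
  by (induction w) (simp_all add: mid_def)

lemma comps_add: "comps sig n (k + m) a = morph_word (comps sig n k) (comps sig (n + k) m a)"
proof (induction k arbitrary: n)
  case 0 show ?case by (simp add: morph_word_mid)
next
  case (Suc k)
  have "comps sig n (Suc k + m) a = morph_word (sig n) (comps sig (Suc n) (k + m) a)"
    by (simp add: mcomp_def)
  also have "\<dots> = morph_word (sig n) (morph_word (comps sig (Suc n) k) (comps sig (Suc n + k) m a))"
    using Suc.IH by simp
  also have "\<dots> = morph_word (comps sig n (Suc k)) (comps sig (n + Suc k) m a)"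
    by (simp add: morph_word_comp)
  finally show ?case .
qed

lemma concat_pos:
  assumes "q < length (morph_word f v)"
  shows "\<exists>us c vs. v = us @ c # vs \<and> length (morph_word f us) \<le> q
           \<and> q < length (morph_word f us) + length (f c)"
  using assms
proof (induction v arbitrary: q)
  case Nil thus ?case by simp
next
  case (Cons a v)
  show ?case
  proof (cases "q < length (f a)")
    case True then show ?thesis by (rule_tac x="[]" in exI) auto
  next
    case False
    then have "q - length (f a) < length (morph_word f v)" using Cons.prems by simp
    from Cons.IH[OF this] obtain us c vs where
      "v = us @ c # vs" "length (morph_word f us) \<le> q - length (f a)"
      "q - length (f a) < length (morph_word f us) + length (f c)" by blast
    then show ?thesis using False by (rule_tac x="a # us" in exI) auto
  qed
qed

lemma length_factor[simp]: "length (factor_at x j n) = n"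
  by (simp add: factor_at_def)

lemma factor_sub: "t + m \<le> n \<Longrightarrow> factor_at x (j + int t) m = take m (drop t (factor_at x j n))"
  by (auto simp: factor_at_def list_eq_iff_nth_eq algebra_simps)

lemma factor_nth: "factor_at x p m = w \<Longrightarrow> t < m \<Longrightarrow> x (p + int t) = w ! t"
  by (auto simp: factor_at_def)

lemma take_drop_mid: "L = A @ u @ C \<Longrightarrow> t + m \<le> length u \<Longrightarrow>
   take m (drop t u) = take m (drop (length A + t) L)"
  by simp

lemma in_lang: "represents sig X \<Longrightarrow> x \<in> X \<Longrightarrow>
   \<exists>N\<ge>1. \<exists>a u v. comps sig 1 (N - 1) a = u @ factor_at x i n @ v"
  unfolding represents_def by blast



lemma parse_exists:
  assumes rep: "represents sig X" and xX: "x \<in> X"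
    and tau: "\<forall>c. sig 1 c \<noteq> [] \<and> hd (sig 1 c) = s"
  shows "\<exists>c j. j < length (sig 1 c) \<and>
           factor_at x (i - int j) (length (sig 1 c) + 1) = sig 1 c @ [s]"
proof -
  define \<tau> where "\<tau> = sig 1"
  define Mx where "Mx = Max (range (\<lambda>c. length (\<tau> c)))"
  have len_le: "length (\<tau> c) \<le> Mx" for c unfolding Mx_def by (rule Max_ge) auto
  have "length (\<tau> L1) \<ge> 1" using tau unfolding \<tau>_def by (metis One_nat_def Suc_leI length_greater_0_conv)
  hence Mx1: "Mx \<ge> 1" using len_le[of L1] by linarith
  define u where "u = factor_at x (i - int Mx) (2*Mx+1)"
  obtain N d A C where N: "N \<ge> 1" and L: "comps sig 1 (N - 1) d = A @ u @ C"
    using in_lang[OF rep xX] unfolding u_def by blast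
  have "N - 1 \<noteq> 0"
  proof
    assume "N - 1 = 0"
    then have "length (comps sig 1 (N - 1) d) = 1" by (simp add: mid_def)
    then show False using L Mx1 unfolding u_def by simp
  qed
  then obtain k where k: "N - 1 = Suc k" using not0_implies_Suc by blast
  define v where "v = comps sig (Suc 1) k d"
  have Lv: "morph_word \<tau> v = A @ u @ C" using L k unfolding v_def \<tau>_def by (simp add: mcomp_def)
  define q where "q = length A + Mx"
  have "q < length (morph_word \<tau> v)" unfolding Lv q_def u_def by simp
  from concat_pos[OF this] obtain us c vs where v: "v = us @ c # vs"
    and p1: "length (morph_word \<tau> us) \<le> q" and p2: "q < length (morph_word \<tau> us) + length (\<tau> c)"
    by blast
  define p where "p = length (morph_word \<tau> us)"
  have "vs \<noteq> []"
  proof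
    assume "vs = []"
    then have "length (morph_word \<tau> v) = p + length (\<tau> c)" unfolding v p_def by simp
    also have "\<dots> \<le> q + Mx" using p1 len_le[of c] unfolding p_def by simp
    finally show False unfolding Lv q_def u_def by simp
  qed
  then obtain e vs' where vs: "vs = e # vs'" by (cases vs) auto
  obtain r where te: "\<tau> e = s # r" using tau unfolding \<tau>_def by (metis list.collapse)
  have drop: "take (length (\<tau> c) + 1) (drop p (morph_word \<tau> v)) = \<tau> c @ [s]"
    unfolding v vs p_def using te by simp
  define j where "j = q - p"
  define t where "t = p - length A"
  have pA: "p \<ge> length A" using p2 len_le[of c] unfolding p_def q_def by simp
  have "t + (length (\<tau> c) + 1) \<le> 2*Mx+1" using p1 len_le[of c] pA unfolding t_def p_def q_def by simp
  then have "factor_at x (i - int Mx + int t) (length (\<tau> c) + 1)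
        = take (length (\<tau> c) + 1) (drop t u)" unfolding u_def by (rule factor_sub)
  also have "\<dots> = take (length (\<tau> c) + 1) (drop (length A + t) (morph_word \<tau> v))"
    using Lv \<open>t + (length (\<tau> c) + 1) \<le> 2*Mx+1\<close> unfolding u_def by simp
  also have "length A + t = p" using pA unfolding t_def by simp
  finally have "factor_at x (i - int Mx + int t) (length (\<tau> c) + 1) = \<tau> c @ [s]" using drop by simp
  moreover have "i - int Mx + int t = i - int j" using pA p1 unfolding t_def j_def q_def p_def by simp
  moreover have "j < length (\<tau> c)" using p1 p2 unfolding j_def p_def by simp
  ultimately show ?thesis unfolding \<tau>_def by auto
qed



lemma recurrence:
  assumes rep: "represents sig X" and xX: "x \<in> X" and prim: "primitive_seq sig"
    and tau: "\<forall>c. sig 1 c \<noteq> [] \<and> hd (sig 1 c) = s"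
  shows "\<exists>K. \<forall>j. \<exists>t. t + (length (sig 1 b) + 1) \<le> K \<and>
           factor_at x (j + int t) (length (sig 1 b) + 1) = sig 1 b @ [s]"
proof -
  define \<tau> where "\<tau> = sig 1"
  define P where "P = \<tau> b @ [s]"
  obtain N1 where N1: "N1 > 2" "\<forall>a c. a \<in> set (comps sig 2 (N1 - 2) c)"
    using prim unfolding primitive_seq_def by (metis one_le_numeral)
  obtain N2 where N2: "N2 > N1" "\<forall>a c. a \<in> set (comps sig N1 (N2 - N1) c)"
    using prim N1(1) unfolding primitive_seq_def by (metis less_imp_le_nat less_trans one_less_numeral_iff semiring_norm(76) Suc_leI zero_less_Suc One_nat_def le_less_trans less_one not_less)
  define \<beta> where "\<beta> = comps sig 1 (N2 - 1)"
  have occ: "\<exists>A B. \<beta> c = A @ P @ B" for c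
  proof -
    define v where "v = comps sig N1 (N2 - N1) c"
    define W where "W = comps sig 2 (N1 - 2)"
    have "L1 \<in> set v" "L2 \<in> set v" using N2 unfolding v_def by auto
    then obtain e1 e2 v2 where v: "v = e1 # e2 # v2"
      by (cases v; cases "tl v") auto
    have "comps sig 2 ((N1 - 2) + (N2 - N1)) c = morph_word W (comps sig (2 + (N1 - 2)) (N2 - N1) c)"
      unfolding W_def by (rule comps_add)
    moreover have "(N1 - 2) + (N2 - N1) = N2 - 2" "2 + (N1 - 2) = N1" using N1 N2 by auto
    ultimately have c2: "comps sig 2 (N2 - 2) c = morph_word W v" unfolding v_def by simp
    obtain A1 B1 where w1: "W e1 = A1 @ b # B1" using N1(2) unfolding W_def by (metis split_list)
    obtain e' R' where w2: "W e2 = e' # R'" using N1(2) unfolding W_def by (metis list.set_cases)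
    obtain e'' R3 where R3: "B1 @ W e2 @ morph_word W v2 = e'' # R3"
      using w2 by (cases B1) auto
    have c2': "comps sig 2 (N2 - 2) c = A1 @ b # e'' # R3" using c2 v w1 R3 by simp
    obtain r where te: "\<tau> e'' = s # r" using tau unfolding \<tau>_def by (metis list.collapse)
    have "N2 - 1 = Suc (N2 - 2)" using N1 N2 by auto
    then have "\<beta> c = morph_word \<tau> (comps sig (Suc 1) (N2 - 2) c)"
      unfolding \<beta>_def \<tau>_def by (simp add: mcomp_def)
    also have "\<dots> = morph_word \<tau> A1 @ P @ (r @ morph_word \<tau> R3)"
      using c2' te unfolding P_def by (simp add: numeral_2_eq_2)
    finally show ?thesis by blast
  qed
  define Bm where "Bm = Max (range (\<lambda>c. length (\<beta> c)))"
  have Bm: "length (\<beta> c) \<le> Bm" for c unfolding Bm_def by (rule Max_ge) auto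
  define Bw where "Bw = Max ((\<lambda>(n, d). length (comps sig 1 n d)) ` ({..<N2 - 1} \<times> UNIV))"
  have Bw: "n < N2 - 1 \<Longrightarrow> length (comps sig 1 n d) \<le> Bw" for n d
    unfolding Bw_def by (rule Max_ge) auto
  define K where "K = 2 * Bm + Bw + 1"
  have "\<exists>t. t + length P \<le> K \<and> factor_at x (j + int t) (length P) = P" for j
  proof -
    define u where "u = factor_at x j K"
    obtain N d A C where N: "N \<ge> 1" and L: "comps sig 1 (N - 1) d = A @ u @ C"
      using in_lang[OF rep xX] unfolding u_def by blast
    have NN: "N - 1 \<ge> N2 - 1"
    proof (rule ccontr)
      assume "\<not> ?thesis"
      then have "length (comps sig 1 (N - 1) d) \<le> Bw" using Bw by simp
      then show False using L unfolding u_def K_def by simp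
    qed
    have "comps sig 1 ((N2 - 1) + ((N - 1) - (N2 - 1))) d
       = morph_word \<beta> (comps sig (1 + (N2 - 1)) ((N - 1) - (N2 - 1)) d)"
      unfolding \<beta>_def by (rule comps_add)
    then have Lv: "morph_word \<beta> (comps sig N2 ((N - 1) - (N2 - 1)) d) = A @ u @ C"
      using NN L N2 N1 by simp
    define v where "v = comps sig N2 ((N - 1) - (N2 - 1)) d"
    define q where "q = length A + Bm"
    have "q < length (morph_word \<beta> v)" using Lv unfolding v_def q_def u_def K_def by simp
    from concat_pos[OF this] obtain us c vs where v: "v = us @ c # vs"
      and p1: "length (morph_word \<beta> us) \<le> q" and p2: "q < length (morph_word \<beta> us) + length (\<beta> c)"
      by blast
    define p where "p = length (morph_word \<beta> us)"
    obtain A2 B2 where bc: "\<beta> c = A2 @ P @ B2" using occ by blast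
    have pA: "p \<ge> length A" using p2 Bm[of c] unfolding p_def q_def by simp
    define t where "t = p + length A2 - length A"
    have lenbc: "length A2 + length P \<le> length (\<beta> c)" using bc by simp
    have tK: "t + length P \<le> K" using pA p1 Bm[of c] lenbc unfolding t_def K_def q_def p_def by simp
    have "factor_at x (j + int t) (length P) = take (length P) (drop t u)"
      unfolding u_def using tK by (rule factor_sub)
    also have "\<dots> = take (length P) (drop (length A + t) (morph_word \<beta> v))"
      using Lv tK unfolding v_def u_def by simp
    also have "length A + t = p + length A2" using pA unfolding t_def by simp
    also have "take (length P) (drop (p + length A2) (morph_word \<beta> v)) = P"
      unfolding v p_def using bc by simp
    finally show ?thesis using tK by blast
  qed
  then show ?thesis unfolding P_def \<tau>_def by auto
qed



definition ind :: "bool \<Rightarrow> real" where "ind P = (if P then 1 else 0)"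

definition pat :: "biword \<Rightarrow> morph \<Rightarrow> letter \<Rightarrow> letter \<Rightarrow> int \<Rightarrow> bool" where
  "pat x \<tau> s c p \<longleftrightarrow> factor_at x p (length (\<tau> c) + 1) = \<tau> c @ [s]"

lemma nth_in_tl: "0 < t \<Longrightarrow> t < length w \<Longrightarrow> w ! t \<in> set (tl w)"
  by (cases w) (auto simp: nth_Cons split: nat.splits)

lemma pat_nth:
  assumes "pat x \<tau> s c p" "t \<le> length (\<tau> c)"
  shows "x (p + int t) = (\<tau> c @ [s]) ! t"
  using assms factor_nth unfolding pat_def by (metis less_Suc_eq_le Suc_eq_plus1)

lemma pat_uniq:
  assumes tau: "\<forall>c. \<tau> c \<noteq> [] \<and> hd (\<tau> c) = s \<and> s \<notin> set (tl (\<tau> c))" and inj: "inj \<tau>"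
    and P: "pat x \<tau> s c p" and P': "pat x \<tau> s c' p'"
    and i: "p \<le> i" "i < p + int (length (\<tau> c))" "p' \<le> i" "i < p' + int (length (\<tau> c'))"
  shows "c = c' \<and> p = p'"
proof -
  have start: "x q = s" if "pat x \<tau> s d q" for d q
  proof -
    have "x q = (\<tau> d @ [s]) ! 0" using pat_nth[OF that, of 0] by simp
    also have "\<dots> = s" using spec[OF tau, of d] by (cases "\<tau> d") auto
    finally show ?thesis .
  qed
  have inner: "x (q + int t) \<noteq> s" if "pat x \<tau> s d q" "0 < t" "t < length (\<tau> d)" for d q t
    using pat_nth[OF that(1), of t] that spec[OF tau, of d] nth_in_tl[OF that(2,3)] by (auto simp: nth_append)
  have endd: "x (q + int (length (\<tau> d))) = s" if "pat x \<tau> s d q" for d q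
    using pat_nth[OF that, of "length (\<tau> d)"] by simp
  have pp: "p = p'"
  proof (rule ccontr)
    assume "p \<noteq> p'"
    then consider "p < p'" | "p' < p" by linarith
    then show False
    proof cases
      case 1
      define t where "t = nat (p' - p)"
      have "x (p + int t) \<noteq> s" using inner[OF P, of t] 1 i unfolding t_def by simp
      moreover have "p + int t = p'" using 1 unfolding t_def by simp
      ultimately show False using start[OF P'] by simp
    next
      case 2
      define t where "t = nat (p - p')"
      have "x (p' + int t) \<noteq> s" using inner[OF P', of t] 2 i unfolding t_def by simp
      moreover have "p' + int t = p" using 2 unfolding t_def by simp
      ultimately show False using start[OF P] by simp
    qed
  qed
  have ll: "length (\<tau> c) = length (\<tau> c')"
  proof (rule ccontr)
    assume "length (\<tau> c) \<noteq> length (\<tau> c')"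
    then consider "length (\<tau> c) < length (\<tau> c')" | "length (\<tau> c') < length (\<tau> c)" by linarith
    then show False
    proof cases
      case 1
      then show False using endd[OF P] inner[OF P', of "length (\<tau> c)"] tau pp by auto
    next
      case 2
      then show False using endd[OF P'] inner[OF P, of "length (\<tau> c')"] tau pp by auto
    qed
  qed
  have "\<tau> c = \<tau> c'"
  proof (rule nth_equalityI)
    show "length (\<tau> c) = length (\<tau> c')" by (rule ll)
    fix t assume "t < length (\<tau> c)"
    then show "\<tau> c ! t = \<tau> c' ! t"
      using pat_nth[OF P, of t] pat_nth[OF P', of t] pp ll by (simp add: nth_append)
  qed
  then show ?thesis using inj pp by (simp add: inj_eq)
qed

lemma pointwise:
  assumes tau: "\<forall>c. \<tau> c \<noteq> [] \<and> hd (\<tau> c) = s \<and> s \<notin> set (tl (\<tau> c))" and inj: "inj \<tau>"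
    and ex: "\<exists>c j. j < length (\<tau> c) \<and> pat x \<tau> s c (i - int j)"
  shows "g (x i) = (\<Sum>c\<in>UNIV. \<Sum>j<length (\<tau> c). g (\<tau> c ! j) * ind (pat x \<tau> s c (i - int j)))"
proof -
  obtain c0 j0 where j0: "j0 < length (\<tau> c0)" and P0: "pat x \<tau> s c0 (i - int j0)" using ex by blast
  have U: "c = c0 \<and> j = j0" if "j < length (\<tau> c)" "pat x \<tau> s c (i - int j)" for c j
    using pat_uniq[OF tau inj that(2) P0, of i] that j0 by auto
  have inner: "(\<Sum>j<length (\<tau> c). g (\<tau> c ! j) * ind (pat x \<tau> s c (i - int j)))
      = (if c = c0 then g (\<tau> c0 ! j0) else 0)" for c
  proof -
    have "(\<Sum>j<length (\<tau> c). g (\<tau> c ! j) * ind (pat x \<tau> s c (i - int j)))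
       = (\<Sum>j<length (\<tau> c). if j = j0 then (if c = c0 then g (\<tau> c0 ! j0) else 0) else 0)"
      by (rule sum.cong) (auto simp: ind_def dest: U intro: P0)
    also have "\<dots> = (if c = c0 then g (\<tau> c0 ! j0) else 0)" using j0 by auto
    finally show ?thesis .
  qed
  have "x i = \<tau> c0 ! j0" using pat_nth[OF P0, of j0] j0 by (simp add: nth_append)
  then show ?thesis by (simp add: inner)
qed



lemma ind_nonneg[simp]: "0 \<le> ind P" and ind_le1[simp]: "ind P \<le> 1"
  by (auto simp: ind_def)

lemma telescope_int:
  "(\<Sum>i\<in>{1..int n}. (H (i - 1) - H i :: real)) = H 0 - H (int n)"
proof (induction n)
  case 0 then show ?case by simp
next
  case (Suc n)
  have "{1..int (Suc n)} = insert (1 + int n) {1..int n}"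
    using atLeastAtMostPlus1_int_conv[of 1 "int n"] by simp
  then show ?case using Suc by simp
qed

lemma shift_bound:
  assumes "\<And>i. 0 \<le> F i" "\<And>i. F i \<le> (1::real)"
  shows "\<bar>(\<Sum>i\<in>{1..int n}. F (i - int j)) - (\<Sum>i\<in>{1..int n}. F i)\<bar> \<le> real j"
proof (induction j)
  case 0 then show ?case by simp
next
  case (Suc j)
  have "(\<Sum>i\<in>{1..int n}. F (i - int (Suc j))) - (\<Sum>i\<in>{1..int n}. F (i - int j))
      = (\<Sum>i\<in>{1..int n}. F ((i - 1) - int j) - F (i - int j))"
    by (simp add: sum_subtractf algebra_simps)
  also have "\<dots> = F (0 - int j) - F (int n - int j)"
    using telescope_int[of "\<lambda>i. F (i - int j)" n] by simp
  finally have "\<bar>(\<Sum>i\<in>{1..int n}. F (i - int (Suc j))) - (\<Sum>i\<in>{1..int n}. F (i - int j))\<bar> \<le> 1"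
    using assms[of "0 - int j"] assms[of "int n - int j"] by simp
  then show ?case using Suc.IH by simp
qed

lemma count_lb:
  assumes rec: "\<forall>j. \<exists>t. t + m \<le> K \<and> Q (j + int t)" and m: "m \<ge> 1"
  shows "real (n div K) \<le> (\<Sum>i\<in>{1..int n}. ind (Q i))"
proof -
  have step: "real m' \<le> (\<Sum>i\<in>{1..int (m' * K)}. ind (Q i))" for m'
  proof (induction m')
    case 0 then show ?case by (simp add: sum_nonneg)
  next
    case (Suc m')
    have U: "{1..int (Suc m' * K)} = {1..int (m' * K)} \<union> {int (m' * K) + 1..int (m' * K) + int K}"
      by (auto simp del: of_nat_mult simp: distrib_right)
    have "(\<Sum>i\<in>{1..int (Suc m' * K)}. ind (Q i))
        = (\<Sum>i\<in>{1..int (m' * K)}. ind (Q i)) + (\<Sum>i\<in>{int (m' * K) + 1..int (m' * K) + int K}. ind (Q i))"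
      unfolding U by (rule sum.union_disjoint) auto
    moreover have "1 \<le> (\<Sum>i\<in>{int (m' * K) + 1..int (m' * K) + int K}. ind (Q i))"
    proof -
      obtain t where t: "t + m \<le> K" "Q (int (m' * K) + 1 + int t)" using rec by blast
      have "ind (Q (int (m' * K) + 1 + int t)) \<le> (\<Sum>i\<in>{int (m' * K) + 1..int (m' * K) + int K}. ind (Q i))"
        by (rule member_le_sum) (use t m in auto)
      then show ?thesis using t by (simp add: ind_def)
    qed
    ultimately show ?case using Suc.IH by simp
  qed
  have "(\<Sum>i\<in>{1..int (n div K * K)}. ind (Q i)) \<le> (\<Sum>i\<in>{1..int n}. ind (Q i))"
    by (rule sum_mono2) (auto simp del: of_nat_mult intro: order_trans[OF _ div_times_less_eq_dividend])
  then show ?thesis using step[of "n div K"] by simp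
qed



lemma sum_letter_card:
  "(\<Sum>i\<in>A. g (x i)) = (\<Sum>a\<in>UNIV. (g a :: real) * real (card {i\<in>A. x i = a}))" if "finite A" for x :: biword and A :: "int set"
proof -
  have "(\<Sum>i\<in>A. g (x i)) = (\<Sum>i\<in>A. \<Sum>a\<in>UNIV. if x i = a then g a else 0)"
    by (intro sum.cong refl) (simp add: sum.delta eq_commute)
  also have "\<dots> = (\<Sum>a\<in>UNIV. \<Sum>i\<in>A. if x i = a then g a else 0)" by (rule sum.swap)
  also have "\<dots> = (\<Sum>a\<in>UNIV. g a * real (card {i\<in>A. x i = a}))"
    using that by (simp add: sum.inter_filter[symmetric] mult.commute)
  finally show ?thesis .
qed

lemma key_abstract:
  fixes \<tau> :: morph and g :: "letter \<Rightarrow> real"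
  assumes tau: "\<forall>c. \<tau> c \<noteq> [] \<and> hd (\<tau> c) = s \<and> s \<notin> set (tl (\<tau> c))" and inj: "inj \<tau>"
    and ex: "\<forall>i. \<exists>c j. j < length (\<tau> c) \<and> pat x \<tau> s c (i - int j)"
    and rec: "\<exists>K. \<forall>j. \<exists>t. t + (length (\<tau> b) + 1) \<le> K \<and> pat x \<tau> s b (j + int t)"
    and freq: "\<forall>a. (\<lambda>n. real (card {i \<in> {1..int n}. x i = a}) / real n) \<longlonglongrightarrow> lam a"
    and h: "\<forall>c. 0 \<le> sum_list (map g (\<tau> c))" and hb: "0 < sum_list (map g (\<tau> b))"
  shows "0 < (\<Sum>a\<in>UNIV. g a * lam a)"
proof -
  obtain K where K: "\<forall>j. \<exists>t. t + (length (\<tau> b) + 1) \<le> K \<and> pat x \<tau> s b (j + int t)" using rec by blast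
  have Kpos: "K > 0" using K by fastforce
  define G where "G c j n = (\<Sum>i\<in>{1..int n}. ind (pat x \<tau> s c (i - int j)))" for c j n
  define hh where "hh c = sum_list (map g (\<tau> c))" for c
  have hh: "hh c = (\<Sum>j<length (\<tau> c). g (\<tau> c ! j))" for c
    unfolding hh_def by (simp add: sum_list_sum_nth atLeast0LessThan)
  define E0 where "E0 = (\<Sum>c\<in>UNIV. \<Sum>j<length (\<tau> c). \<bar>g (\<tau> c ! j)\<bar> * real j)"
  have lower: "hh b * (real n / real K - 1) - E0 \<le> (\<Sum>a\<in>UNIV. g a * real (card {i \<in> {1..int n}. x i = a}))" for n
  proof -
    have S: "(\<Sum>i\<in>{1..int n}. g (x i)) = (\<Sum>c\<in>UNIV. \<Sum>j<length (\<tau> c). g (\<tau> c ! j) * G c j n)"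
    proof -
      have "(\<Sum>i\<in>{1..int n}. g (x i)) = (\<Sum>i\<in>{1..int n}. \<Sum>c\<in>UNIV. \<Sum>j<length (\<tau> c). g (\<tau> c ! j) * ind (pat x \<tau> s c (i - int j)))"
        using pointwise[OF tau inj] ex by (intro sum.cong) auto
      also have "\<dots> = (\<Sum>c\<in>UNIV. \<Sum>i\<in>{1..int n}. \<Sum>j<length (\<tau> c). g (\<tau> c ! j) * ind (pat x \<tau> s c (i - int j)))"
        by (rule sum.swap)
      also have "\<dots> = (\<Sum>c\<in>UNIV. \<Sum>j<length (\<tau> c). \<Sum>i\<in>{1..int n}. g (\<tau> c ! j) * ind (pat x \<tau> s c (i - int j)))"
        by (intro sum.cong refl sum.swap)
      also have "\<dots> = (\<Sum>c\<in>UNIV. \<Sum>j<length (\<tau> c). g (\<tau> c ! j) * G c j n)"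
        unfolding G_def by (simp add: sum_distrib_left)
      finally show ?thesis .
    qed
    have T: "g (\<tau> c ! j) * G c 0 n - \<bar>g (\<tau> c ! j)\<bar> * real j \<le> g (\<tau> c ! j) * G c j n" for c j
    proof -
      have "\<bar>G c j n - G c 0 n\<bar> \<le> real j"
        unfolding G_def using shift_bound[where F="\<lambda>i. ind (pat x \<tau> s c i)" and n=n and j=j] by simp
      then have "\<bar>g (\<tau> c ! j) * (G c j n - G c 0 n)\<bar> \<le> \<bar>g (\<tau> c ! j)\<bar> * real j"
        by (simp add: abs_mult mult_left_mono)
      then show ?thesis by (simp add: algebra_simps abs_le_iff)
    qed
    have "(\<Sum>c\<in>UNIV. hh c * G c 0 n) - E0
        = (\<Sum>c\<in>UNIV. \<Sum>j<length (\<tau> c). g (\<tau> c ! j) * G c 0 n - \<bar>g (\<tau> c ! j)\<bar> * real j)"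
      unfolding E0_def hh by (simp add: sum_subtractf sum_distrib_right)
    also have "\<dots> \<le> (\<Sum>c\<in>UNIV. \<Sum>j<length (\<tau> c). g (\<tau> c ! j) * G c j n)"
      by (intro sum_mono T)
    finally have A: "(\<Sum>c\<in>UNIV. hh c * G c 0 n) - E0 \<le> (\<Sum>i\<in>{1..int n}. g (x i))" using S by simp
    have G0: "0 \<le> G c 0 n" for c unfolding G_def by (simp add: sum_nonneg)
    have "hh b * G b 0 n \<le> (\<Sum>c\<in>UNIV. hh c * G c 0 n)"
      by (rule member_le_sum) (use h G0 in \<open>auto simp: hh_def\<close>)
    moreover have "real n / real K - 1 \<le> G b 0 n"
    proof -
      have "real (n div K) \<le> G b 0 n"
        unfolding G_def using count_lb[of "length (\<tau> b) + 1" K "pat x \<tau> s b" n] K by simp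
      moreover have "real n / real K - 1 \<le> real (n div K)"
      proof -
        have "n < (n div K + 1) * K" using Kpos
          by (metis add.commute div_mult_mod_eq mod_less_divisor nat_add_left_cancel_less distrib_right mult_1)
        then have "real n < (real (n div K) + 1) * real K" by (metis of_nat_1 of_nat_add of_nat_less_iff of_nat_mult)
        then show ?thesis using Kpos by (simp add: field_simps)
      qed
      ultimately show ?thesis by simp
    qed
    ultimately have "hh b * (real n / real K - 1) \<le> (\<Sum>c\<in>UNIV. hh c * G c 0 n)"
      using hb unfolding hh_def by (meson mult_left_mono less_imp_le order_trans)
    then show ?thesis using A sum_letter_card[of "{1..int n}" g x] by simp
  qed
  have lim1: "(\<lambda>n. (\<Sum>a\<in>UNIV. g a * (real (card {i \<in> {1..int n}. x i = a}) / real n))) \<longlonglongrightarrow> (\<Sum>a\<in>UNIV. g a * lam a)"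
    using freq by (intro tendsto_sum tendsto_mult_left) auto
  have lim2: "(\<lambda>n. hh b / real K - (hh b + E0) / real n) \<longlonglongrightarrow> hh b / real K - 0"
    by (intro tendsto_diff tendsto_const lim_const_over_n)
  have "hh b / real K \<le> (\<Sum>a\<in>UNIV. g a * lam a)"
  proof (rule LIMSEQ_le[OF lim2[simplified] lim1])
    show "\<exists>N. \<forall>n\<ge>N. hh b / real K - (hh b + E0) / real n \<le> (\<Sum>a\<in>UNIV. g a * (real (card {i \<in> {1..int n}. x i = a}) / real n))"
    proof (intro exI allI impI)
      fix n :: nat assume "1 \<le> n"
      then have np: "real n > 0" by simp
      have "hh b / real K - (hh b + E0) / real n = (hh b * (real n / real K - 1) - E0) / real n"
        using np by (simp add: field_simps)
      also have "\<dots> \<le> (\<Sum>a\<in>UNIV. g a * real (card {i \<in> {1..int n}. x i = a})) / real n"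
        using lower[of n] np by (simp add: divide_right_mono)
      also have "\<dots> = (\<Sum>a\<in>UNIV. g a * (real (card {i \<in> {1..int n}. x i = a}) / real n))"
        by (simp add: sum_divide_distrib)
      finally show "hh b / real K - (hh b + E0) / real n \<le> (\<Sum>a\<in>UNIV. g a * (real (card {i \<in> {1..int n}. x i = a}) / real n))" .
    qed
  qed
  moreover have "0 < hh b / real K" using hb Kpos unfolding hh_def by simp
  ultimately show ?thesis by linarith
qed



lemma key:
  fixes g :: "letter \<Rightarrow> real"
  assumes rep: "represents sig X" and prim: "primitive_seq sig" and xX: "x \<in> X"
    and fr: "has_letter_freqs X lam"
    and tau: "\<forall>c. sig 1 c \<noteq> [] \<and> hd (sig 1 c) = s \<and> s \<notin> set (tl (sig 1 c))" and inj: "inj (sig 1)"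
    and h: "\<forall>c. 0 \<le> sum_list (map g (sig 1 c))" and hb: "0 < sum_list (map g (sig 1 b))"
  shows "0 < g L1 * lam L1 + g L2 * lam L2 + g L3 * lam L3"
proof -
  have tau': "\<forall>c. sig 1 c \<noteq> [] \<and> hd (sig 1 c) = s" using tau by blast
  have ex: "\<forall>i. \<exists>c j. j < length (sig 1 c) \<and> pat x (sig 1) s c (i - int j)"
    using parse_exists[OF rep xX tau'] unfolding pat_def by blast
  have rec: "\<exists>K. \<forall>j. \<exists>t. t + (length (sig 1 b) + 1) \<le> K \<and> pat x (sig 1) s b (j + int t)"
    using recurrence[OF rep xX prim tau', of b] unfolding pat_def by blast
  have freq: "\<forall>a. (\<lambda>n. real (card {i \<in> {1..int n}. x i = a}) / real n) \<longlonglongrightarrow> lam a"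
    using fr xX unfolding has_letter_freqs_def by blast
  have "0 < (\<Sum>a\<in>UNIV. g a * lam a)"
    by (rule key_abstract[OF tau inj ex rec freq h hb])
  then show ?thesis by (simp add: UNIV_letter)
qed

lemma morph_word_replicate: "morph_word f (replicate k a) = concat (replicate k (f a))"
  by (induction k) auto
lemma concat_replicate_single: "concat (replicate k [a]) = replicate k a"
  by (induction k) auto

lemma tauE: "mcomp (pi L1 L3 L2) (mcomp eta (pi L3 L2 L1)) =
   (\<lambda>c. case c of L1 \<Rightarrow> [L1,L3,L2] | L2 \<Rightarrow> [L1,L3] | L3 \<Rightarrow> [L1,L2])"
  by (rule ext, case_tac c) (simp_all add: mcomp_def pi_def eta_def morph_word_def)
lemma tauB: "mcomp (pi L3 L1 L2) (mcomp beta (pi L2 L1 L3)) =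
   (\<lambda>c. case c of L1 \<Rightarrow> [L3,L1] | L2 \<Rightarrow> [L3] | L3 \<Rightarrow> [L3,L2,L1])"
  by (rule ext, case_tac c) (simp_all add: mcomp_def pi_def beta_def morph_word_def)
lemma tauG: "mcomp (pi L2 L1 L3) gamma =
   (\<lambda>c. case c of L1 \<Rightarrow> [L2] | L2 \<Rightarrow> [L2,L1] | L3 \<Rightarrow> [L2,L1,L3])"
  by (rule ext, case_tac c) (simp_all add: mcomp_def pi_def gamma_def morph_word_def)
lemma tauD: "mcomp (pi L2 L1 L3) (delta k) =
   (\<lambda>c. case c of L1 \<Rightarrow> [L2] | L2 \<Rightarrow> L2 # L1 # replicate k L3 | L3 \<Rightarrow> L2 # L1 # replicate (k+1) L3)"
  by (rule ext, case_tac c)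
     (simp_all add: mcomp_def pi_def delta_def morph_word_replicate concat_replicate_single del: replicate.simps)
lemma tauA: "alpha = (\<lambda>c. case c of L1 \<Rightarrow> [L1] | L2 \<Rightarrow> [L1,L2] | L3 \<Rightarrow> [L1,L3])"
  by (simp add: alpha_def)



lemma all_letter: "(\<forall>c. P c) \<longleftrightarrow> P L1 \<and> P L2 \<and> P L3"
  by (metis letter.exhaust)
lemma inj_letter: "inj f \<longleftrightarrow> f L1 \<noteq> f L2 \<and> f L1 \<noteq> f L3 \<and> f L2 \<noteq> f L3"
  unfolding inj_def by (metis letter.exhaust letter.distinct)
lemma neq_at: "f a \<noteq> g a \<Longrightarrow> f \<noteq> g" by auto

lemma delta_excl:
  fixes l1 l3 :: real
  assumes "real k0 * l1 < l3" "l3 < real (k0+1) * l1" "real k * l1 < l3" "l3 < real (k+1) * l1"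
  shows "k = k0"
proof (rule ccontr)
  have l1: "l1 > 0" using assms(1,2) by (simp add: algebra_simps)
  assume "k \<noteq> k0"
  then consider "k + 1 \<le> k0" | "k0 + 1 \<le> k" by linarith
  then show False
  proof cases
    case 1
    then have "real (k+1) * l1 \<le> real k0 * l1" using l1 by (intro mult_right_mono) auto
    then show False using assms by linarith
  next
    case 2
    then have "real (k0+1) * l1 \<le> real k * l1" using l1 by (intro mult_right_mono) auto
    then show False using assms by linarith
  qed
qed

lemma dD_neq: "k \<noteq> k' \<Longrightarrow> mcomp (pi L2 L1 L3) (delta k) \<noteq> mcomp (pi L2 L1 L3) (delta k')"
  by (rule neq_at[of _ L2]) (simp add: tauD)

theorem lemma6p8:
  fixes X :: "biword set" and sig :: "nat \<Rightarrow> morph" and lam :: "letter \<Rightarrow> real"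
  assumes "minimal_shift X" and "dendric X"
    and "\<forall>n\<ge>1. non_erasing (sig n)"
    and "primitive_seq sig" and "SSS_adic sig" and "represents sig X"
    and "has_letter_freqs X lam"
    and "sig 1 \<in> {alpha, mcomp (pi L1 L3 L2) (mcomp eta (pi L3 L2 L1)),
                  mcomp (pi L3 L1 L2) (mcomp beta (pi L2 L1 L3)),
                  mcomp (pi L2 L1 L3) gamma}
                 \<union> {mcomp (pi L2 L1 L3) (delta k) | k. k \<ge> 1}"
  shows "(lam L1 > lam L2 + lam L3 \<longleftrightarrow> sig 1 = alpha)
    \<and> ((lam L2 < lam L1 \<and> lam L3 < lam L1 \<and> lam L1 < lam L2 + lam L3) \<longleftrightarrow>
        sig 1 = mcomp (pi L1 L3 L2) (mcomp eta (pi L3 L2 L1)))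
    \<and> ((lam L2 < lam L1 \<and> lam L1 < lam L3) \<longleftrightarrow>
        sig 1 = mcomp (pi L3 L1 L2) (mcomp beta (pi L2 L1 L3)))
    \<and> ((lam L3 < lam L1 \<and> lam L1 < lam L2) \<longleftrightarrow> sig 1 = mcomp (pi L2 L1 L3) gamma)
    \<and> (\<forall>k\<ge>1. (lam L1 < lam L2 \<and> lam L1 < lam L3 \<and>
               real k * lam L1 < lam L3 \<and> lam L3 < real (k + 1) * lam L1) \<longleftrightarrow>
              sig 1 = mcomp (pi L2 L1 L3) (delta k))"
proof -
  note rep = assms(6) and prim = assms(4) and fr = assms(7)
  obtain x where xX: "x \<in> X"
    using assms(1) unfolding minimal_shift_def shift_space_def by blast
  have nn: "0 \<le> lam a" for a
  proof -
    have "(\<lambda>n. real (card {i \<in> {1..int n}. x i = a}) / real n) \<longlonglongrightarrow> lam a"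
      using fr xX unfolding has_letter_freqs_def by blast
    then show ?thesis by (rule LIMSEQ_le_const) auto
  qed
  note K = key[OF rep prim xX fr]
  define MA where "MA = alpha"
  define ME where "ME = mcomp (pi L1 L3 L2) (mcomp eta (pi L3 L2 L1))"
  define MB where "MB = mcomp (pi L3 L1 L2) (mcomp beta (pi L2 L1 L3))"
  define MG where "MG = mcomp (pi L2 L1 L3) gamma"
  define MD where "MD k = mcomp (pi L2 L1 L3) (delta k)" for k
  have ne: "MA \<noteq> ME" "MA \<noteq> MB" "MA \<noteq> MG" "MA \<noteq> MD k" "ME \<noteq> MB" "ME \<noteq> MG" "ME \<noteq> MD k"
    "MB \<noteq> MG" "MB \<noteq> MD k" for k
    by (rule neq_at[of _ L1], simp add: MA_def ME_def MB_def MG_def MD_def tauA tauE tauB tauG tauD)+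
  have neGD: "MG \<noteq> MD k" if "k \<ge> 1" for k
    by (rule neq_at[of _ L2]) (use that in \<open>simp add: MG_def MD_def tauG tauD\<close>)
  have cases: "sig 1 = MA \<or> sig 1 = ME \<or> sig 1 = MB \<or> sig 1 = MG \<or> (\<exists>k\<ge>1. sig 1 = MD k)"
    using assms(8) unfolding MA_def ME_def MB_def MG_def MD_def by blast
  note fold = MA_def[symmetric] ME_def[symmetric] MB_def[symmetric] MG_def[symmetric] MD_def[symmetric]
  show ?thesis
  proof -
    consider (A) "sig 1 = MA" | (E) "sig 1 = ME" | (B) "sig 1 = MB" | (G) "sig 1 = MG"
      | (D) k0 where "k0 \<ge> 1" "sig 1 = MD k0" using cases by blast
    then show ?thesis
    proof cases
      case A
      have s: "sig 1 = (\<lambda>c. case c of L1 \<Rightarrow> [L1] | L2 \<Rightarrow> [L1,L2] | L3 \<Rightarrow> [L1,L3])"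
        using A tauA unfolding MA_def by simp
      have iA: "0 < lam L1 - lam L2 - lam L3"
        using K[of L1 "\<lambda>a. case a of L1 \<Rightarrow> 1 | L2 \<Rightarrow> -1 | L3 \<Rightarrow> -1" L1, unfolded s]
        by (simp add: sum_list_replicate all_letter inj_letter)
      show ?thesis unfolding fold
        apply (intro conjI)
        subgoal using A  iA nn[of L1] nn[of L2] nn[of L3] by auto
        subgoal using A ne(1) iA nn[of L1] nn[of L2] nn[of L3] by auto
        subgoal using A ne(2) iA nn[of L1] nn[of L2] nn[of L3] by auto
        subgoal using A ne(3) iA nn[of L1] nn[of L2] nn[of L3] by auto
        subgoal proof (intro allI impI)
          fix k :: nat assume "k \<ge> 1"
          then show "(lam L1 < lam L2 \<and> lam L1 < lam L3 \<and>
               real k * lam L1 < lam L3 \<and> lam L3 < real (k + 1) * lam L1) \<longleftrightarrow> sig 1 = MD k"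
            using A ne(4)[of k] iA nn[of L1] nn[of L2] nn[of L3] by auto
        qed
        done
    next
      case E
      have s: "sig 1 = (\<lambda>c. case c of L1 \<Rightarrow> [L1,L3,L2] | L2 \<Rightarrow> [L1,L3] | L3 \<Rightarrow> [L1,L2])"
        using E tauE unfolding ME_def by simp
      have "0 < lam L1 - lam L2"
        using K[of L1 "\<lambda>a. case a of L1 \<Rightarrow> 1 | L2 \<Rightarrow> -1 | L3 \<Rightarrow> 0" L2, unfolded s]
        by (simp add: sum_list_replicate all_letter inj_letter)
      moreover have "0 < lam L1 - lam L3"
        using K[of L1 "\<lambda>a. case a of L1 \<Rightarrow> 1 | L2 \<Rightarrow> 0 | L3 \<Rightarrow> -1" L3, unfolded s]
        by (simp add: sum_list_replicate all_letter inj_letter)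
      moreover have "0 < lam L2 + lam L3 - lam L1"
        using K[of L1 "\<lambda>a. case a of L1 \<Rightarrow> -1 | L2 \<Rightarrow> 1 | L3 \<Rightarrow> 1" L1, unfolded s]
        by (simp add: sum_list_replicate all_letter inj_letter)
      note ii = calculation this
      show ?thesis unfolding fold
        apply (intro conjI)
        subgoal using E ne(1) ii nn[of L1] nn[of L2] nn[of L3] by auto
        subgoal using E  ii nn[of L1] nn[of L2] nn[of L3] by auto
        subgoal using E ne(5) ii nn[of L1] nn[of L2] nn[of L3] by auto
        subgoal using E ne(6) ii nn[of L1] nn[of L2] nn[of L3] by auto
        subgoal proof (intro allI impI)
          fix k :: nat assume "k \<ge> 1"
          then show "(lam L1 < lam L2 \<and> lam L1 < lam L3 \<and>
               real k * lam L1 < lam L3 \<and> lam L3 < real (k + 1) * lam L1) \<longleftrightarrow> sig 1 = MD k"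
            using E ne(7)[of k] ii nn[of L1] nn[of L2] nn[of L3] by auto
        qed
        done
    next
      case B
      have s: "sig 1 = (\<lambda>c. case c of L1 \<Rightarrow> [L3,L1] | L2 \<Rightarrow> [L3] | L3 \<Rightarrow> [L3,L2,L1])"
        using B tauB unfolding MB_def by simp
      have "0 < lam L1 - lam L2"
        using K[of L3 "\<lambda>a. case a of L1 \<Rightarrow> 1 | L2 \<Rightarrow> -1 | L3 \<Rightarrow> 0" L1, unfolded s]
        by (simp add: sum_list_replicate all_letter inj_letter)
      moreover have "0 < lam L3 - lam L1"
        using K[of L3 "\<lambda>a. case a of L1 \<Rightarrow> -1 | L2 \<Rightarrow> 0 | L3 \<Rightarrow> 1" L2, unfolded s]
        by (simp add: sum_list_replicate all_letter inj_letter)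
      note ii = calculation this
      show ?thesis unfolding fold
        apply (intro conjI)
        subgoal using B ne(2) ii nn[of L1] nn[of L2] nn[of L3] by auto
        subgoal using B ne(5) ii nn[of L1] nn[of L2] nn[of L3] by auto
        subgoal using B  ii nn[of L1] nn[of L2] nn[of L3] by auto
        subgoal using B ne(8) ii nn[of L1] nn[of L2] nn[of L3] by auto
        subgoal proof (intro allI impI)
          fix k :: nat assume "k \<ge> 1"
          then show "(lam L1 < lam L2 \<and> lam L1 < lam L3 \<and>
               real k * lam L1 < lam L3 \<and> lam L3 < real (k + 1) * lam L1) \<longleftrightarrow> sig 1 = MD k"
            using B ne(9)[of k] ii nn[of L1] nn[of L2] nn[of L3] by auto
        qed
        done
    next
      case G
      have s: "sig 1 = (\<lambda>c. case c of L1 \<Rightarrow> [L2] | L2 \<Rightarrow> [L2,L1] | L3 \<Rightarrow> [L2,L1,L3])"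
        using G tauG unfolding MG_def by simp
      have "0 < lam L1 - lam L3"
        using K[of L2 "\<lambda>a. case a of L1 \<Rightarrow> 1 | L2 \<Rightarrow> 0 | L3 \<Rightarrow> -1" L2, unfolded s]
        by (simp add: sum_list_replicate all_letter inj_letter)
      moreover have "0 < lam L2 - lam L1"
        using K[of L2 "\<lambda>a. case a of L1 \<Rightarrow> -1 | L2 \<Rightarrow> 1 | L3 \<Rightarrow> 0" L1, unfolded s]
        by (simp add: sum_list_replicate all_letter inj_letter)
      note ii = calculation this
      show ?thesis unfolding fold
        apply (intro conjI)
        subgoal using G ne(3) ii nn[of L1] nn[of L2] nn[of L3] by auto
        subgoal using G ne(6) ii nn[of L1] nn[of L2] nn[of L3] by auto
        subgoal using G ne(8) ii nn[of L1] nn[of L2] nn[of L3] by auto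
        subgoal using G  ii nn[of L1] nn[of L2] nn[of L3] by auto
        subgoal proof (intro allI impI)
          fix k :: nat assume "k \<ge> 1"
          then show "(lam L1 < lam L2 \<and> lam L1 < lam L3 \<and>
               real k * lam L1 < lam L3 \<and> lam L3 < real (k + 1) * lam L1) \<longleftrightarrow> sig 1 = MD k"
            using G neGD[OF \<open>k \<ge> 1\<close>] ii nn[of L1] nn[of L2] nn[of L3] by auto
        qed
        done
    next
      case D
      have s: "sig 1 = (\<lambda>c. case c of L1 \<Rightarrow> [L2] | L2 \<Rightarrow> L2 # L1 # replicate k0 L3
                          | L3 \<Rightarrow> L2 # L1 # replicate (k0+1) L3)"
        using D tauD unfolding MD_def by simp
      have i1: "0 < lam L2 - lam L1"
        using K[of L2 "\<lambda>a. case a of L1 \<Rightarrow> -1 | L2 \<Rightarrow> 1 | L3 \<Rightarrow> 0" L1, unfolded s] D(1)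
        by (simp add: sum_list_replicate all_letter inj_letter)
      have i2: "0 < lam L3 - lam L1"
        using K[of L2 "\<lambda>a. case a of L1 \<Rightarrow> -1 | L2 \<Rightarrow> 0 | L3 \<Rightarrow> 1" L3, unfolded s] D(1)
        by (simp add: sum_list_replicate all_letter inj_letter)
      have i3: "0 < lam L3 - real k0 * lam L1"
        using K[of L2 "\<lambda>a. case a of L1 \<Rightarrow> - real k0 | L2 \<Rightarrow> 0 | L3 \<Rightarrow> 1" L3, unfolded s] D(1)
        by (simp add: sum_list_replicate all_letter inj_letter algebra_simps)
      have i4: "0 < real (k0 + 1) * lam L1 - lam L3"
        using K[of L2 "\<lambda>a. case a of L1 \<Rightarrow> real (k0 + 1) | L2 \<Rightarrow> 0 | L3 \<Rightarrow> -1" L2, unfolded s] D(1)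
        by (simp add: sum_list_replicate all_letter inj_letter algebra_simps)
      have last: "\<forall>k\<ge>1. (lam L1 < lam L2 \<and> lam L1 < lam L3 \<and>
               real k * lam L1 < lam L3 \<and> lam L3 < real (k + 1) * lam L1) \<longleftrightarrow> sig 1 = MD k"
      proof (intro allI impI)
        fix k :: nat assume "k \<ge> 1"
        show "(lam L1 < lam L2 \<and> lam L1 < lam L3 \<and>
               real k * lam L1 < lam L3 \<and> lam L3 < real (k + 1) * lam L1) \<longleftrightarrow> sig 1 = MD k"
        proof
          assume "lam L1 < lam L2 \<and> lam L1 < lam L3 \<and> real k * lam L1 < lam L3 \<and> lam L3 < real (k + 1) * lam L1"
          then have "k = k0" using i3 i4 by (intro delta_excl[of k0 "lam L1" "lam L3" k]) auto
          then show "sig 1 = MD k" using D by simp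
        next
          assume "sig 1 = MD k"
          then have "k = k0"
          proof (rule contrapos_pp)
            assume "k \<noteq> k0"
            then have "MD k \<noteq> MD k0" unfolding MD_def by (rule dD_neq)
            then show "sig 1 \<noteq> MD k" using D(2) by simp
          qed
          then show "lam L1 < lam L2 \<and> lam L1 < lam L3 \<and> real k * lam L1 < lam L3 \<and> lam L3 < real (k + 1) * lam L1"
            using i1 i2 i3 i4 by simp
        qed
      qed
      have neA: "sig 1 \<noteq> MA" using D(2) ne(4)[of k0] by auto
      have neE: "sig 1 \<noteq> ME" using D(2) ne(7)[of k0] by auto
      have neB: "sig 1 \<noteq> MB" using D(2) ne(9)[of k0] by auto
      have neG: "sig 1 \<noteq> MG" using D neGD[of k0] by auto
      show ?thesis unfolding fold
        apply (intro conjI)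
        subgoal using neA i1 nn[of L3] by auto
        subgoal using neE i1 by auto
        subgoal using neB i1 by auto
        subgoal using neG i2 by auto
        subgoal using last by blast
        done
    qed
  qed
qed

end
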